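(* Consider a block-fading channel with channel power gain $h(\nu)\ge0$ (a random variable with continuous pdf) at fading state $\nu$, constant transmit power $P>0$, and noise power $\sigma^2>0$. For a target $0\le\bar Q\le E_\nu[h(\nu)P]$, let Problem (P1) be: maximize over $\{\alpha(\nu)\}$ the quantity $E_\nu\big[\log\big(1+\frac{\alpha(\nu)h(\nu)P}{\sigma^2}\big)\big]$ subject to $E_\nu[(1-\alpha(\nu))h(\nu)P]\ge\bar Q$ and $0\le\alpha(\nu)\le1$ for all $\nu$. Let $\lambda^\ast\ge0$ be the optimal dual solution of (P1), i.e. a minimizer over $\lambda\ge0$ of the dual function $g(\lambda)=\max_{0\le\alpha(\nu)\le1}\big\{E_\nu[\log(1+\alpha(\nu)h(\nu)P/\sigma^2)]+\lambda\big(E_\nu[(1-\alpha(\nu))h(\nu)P]-\bar Q\big)\big\}$. Then the optimal solution of (P1) is $\alpha^\ast(\nu)=\frac{1}{\lambda^\ast h(\nu)P}-\frac{\sigma^2}{h(\nu)P}$ if $h(\nu)\ge\frac{1}{\lambda^\ast P}-\frac{\sigma^2}{P}$, and $\alpha^\ast(\nu)=1$ otherwise.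
   Context: $\log$ is the natural logarithm. $\alpha(\nu)$ is the fraction of the received power at fading state $\nu$ split to the information decoder; $1-\alpha(\nu)$ is split to the energy harvester. *)

theory Defs
  imports "HOL-Probability.Probability"
begin

definition split_policies :: "'a measure \<Rightarrow> ('a \<Rightarrow> real) set" where
  "split_policies M = {\<alpha>. \<alpha> \<in> borel_measurable M \<and> (\<forall>\<nu>\<in>space M. 0 \<le> \<alpha> \<nu> \<and> \<alpha> \<nu> \<le> 1)}"

definition avg_rate :: "'a measure \<Rightarrow> ('a \<Rightarrow> real) \<Rightarrow> real \<Rightarrow> real \<Rightarrow> ('a \<Rightarrow> real) \<Rightarrow> real" where
  "avg_rate M h P \<sigma> \<alpha> = (\<integral>\<nu>. ln (1 + \<alpha> \<nu> * h \<nu> * P / \<sigma>\<^sup>2) \<partial>M)"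

definition avg_harvest :: "'a measure \<Rightarrow> ('a \<Rightarrow> real) \<Rightarrow> real \<Rightarrow> ('a \<Rightarrow> real) \<Rightarrow> real" where
  "avg_harvest M h P \<alpha> = (\<integral>\<nu>. (1 - \<alpha> \<nu>) * h \<nu> * P \<partial>M)"

definition dual_fun :: "'a measure \<Rightarrow> ('a \<Rightarrow> real) \<Rightarrow> real \<Rightarrow> real \<Rightarrow> real \<Rightarrow> real \<Rightarrow> real" where
  "dual_fun M h P \<sigma> Q lam =
     (SUP \<alpha>\<in>split_policies M. avg_rate M h P \<sigma> \<alpha> + lam * (avg_harvest M h P \<alpha> - Q))"

definition P1_optimal :: "'a measure \<Rightarrow> ('a \<Rightarrow> real) \<Rightarrow> real \<Rightarrow> real \<Rightarrow> real \<Rightarrow> ('a \<Rightarrow> real) \<Rightarrow> bool" where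
  "P1_optimal M h P \<sigma> Q \<alpha> \<longleftrightarrow>
     \<alpha> \<in> split_policies M \<and> avg_harvest M h P \<alpha> \<ge> Q \<and>
     (\<forall>\<beta>\<in>split_policies M. avg_harvest M h P \<beta> \<ge> Q \<longrightarrow>
        avg_rate M h P \<sigma> \<beta> \<le> avg_rate M h P \<sigma> \<alpha>)"

end

theory Submission
  imports Defs
begin

lemma ln_diff_le: "0 < (a::real) \<Longrightarrow> 0 < b \<Longrightarrow> ln a - ln b \<le> (a - b)/b"
proof -
  assume a: "0 < a" "0 < b"
  have "ln a - ln b = ln (a/b)" using a by (simp add: ln_div)
  also have "\<dots> \<le> a/b - 1" using a by (intro ln_le_minus_one) simp
  also have "\<dots> = (a - b)/b" using a by (simp add: field_simps)
  finally show ?thesis .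
qed

lemma pw_core:
  fixes x s lam y :: real
  assumes x: "0 \<le> x" and s: "0 < s" and l: "0 < lam" and y: "0 \<le> y" "y \<le> x"
  shows "ln (1 + y/s) + lam*(x - y) \<le> ln (1 + max 0 (min (1/lam - s) x)/s) + lam*(x - max 0 (min (1/lam - s) x))"
proof -
  define t where "t = max 0 (min (1/lam - s) x)"
  have t0: "0 \<le> t" "t \<le> x" unfolding t_def using x by auto
  have "ln (1 + y/s) - ln (1 + t/s) \<le> ((1 + y/s) - (1 + t/s))/(1 + t/s)"
    using s y t0 by (intro ln_diff_le) (auto simp: field_simps add_pos_nonneg)
  also have "\<dots> = (y - t)/(s + t)"
  proof -
    have "s + t > 0" using s t0 by simp
    then show ?thesis using s by (simp add: divide_simps)
  qed
  also have "\<dots> \<le> lam * (y - t)"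
  proof (cases "1/lam - s \<le> 0")
    case True
    then have "t = 0" unfolding t_def using x by auto
    moreover have "1/s \<le> lam" using True s l by (simp add: field_simps)
    ultimately have "y * (1/s) \<le> y * lam" using y by (intro mult_left_mono) auto
    then show ?thesis using `t = 0` by (simp add: mult.commute)
  next
    case False
    show ?thesis
    proof (cases "1/lam - s \<le> x")
      case True
      then have "t = 1/lam - s" unfolding t_def using False by auto
      then have "s + t = 1/lam" by simp
      then show ?thesis using l by simp
    next
      case F2: False
      then have "t = x" unfolding t_def using False x by auto
      then have "s + t < 1/lam" using F2 by simp
      then have "lam \<le> 1/(s+t)" using l s t0 by (simp add: field_simps)
      moreover have "y - t \<le> 0" using `t = x` y by simp
      ultimately have "(y - t) * (1/(s+t)) \<le> (y - t) * lam" by (intro mult_left_mono_neg) auto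
      then show ?thesis by (simp add: mult.commute)
    qed
  qed
  finally show ?thesis unfolding t_def[symmetric] by (simp add: algebra_simps)
qed

definition apol :: "real \<Rightarrow> real \<Rightarrow> real \<Rightarrow> real \<Rightarrow> real" where
  "apol P \<sigma> lam v = (if lam > 1/\<sigma>\<^sup>2 then 0 else if lam > 0 \<and> v \<ge> 1/(lam*P) - \<sigma>\<^sup>2/P
     then 1/(lam * v * P) - \<sigma>\<^sup>2/(v * P) else 1)"

lemma apol_x:
  assumes v: "0 \<le> v" and P: "0 < P" and sg: "0 < \<sigma>" and l: "0 < lam"
  shows "apol P \<sigma> lam v * v * P = max 0 (min (1/lam - \<sigma>\<^sup>2) (v * P))"
proof (cases "lam > 1/\<sigma>\<^sup>2")
  case True
  then have "1/lam < \<sigma>\<^sup>2" using l sg by (simp add: field_simps)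
  then show ?thesis using True v P by (simp add: apol_def)
next
  case False
  then have u: "0 \<le> 1/lam - \<sigma>\<^sup>2" using l sg by (simp add: field_simps)
  have eq: "1/(lam*P) - \<sigma>\<^sup>2/P = (1/lam - \<sigma>\<^sup>2)/P" using P by (simp add: field_simps)
  show ?thesis
  proof (cases "v \<ge> (1/lam - \<sigma>\<^sup>2)/P")
    case True
    then have le: "1/lam - \<sigma>\<^sup>2 \<le> v * P" using P by (simp add: field_simps)
    show ?thesis
    proof (cases "v = 0")
      case True
      then have "1/lam - \<sigma>\<^sup>2 = 0" using le u by simp
      then show ?thesis using True False l eq by (simp add: apol_def)
    next
      case v0: False
      have "(1/(lam * v * P) - \<sigma>\<^sup>2/(v * P)) * v * P = 1/lam - \<sigma>\<^sup>2"
        using v0 P l by (simp add: field_simps)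
      then show ?thesis using False True l eq le u by (simp add: apol_def)
    qed
  next
    case F2: False
    then have "v * P < 1/lam - \<sigma>\<^sup>2" using P by (simp add: field_simps)
    then show ?thesis using F2 False eq v P by (simp add: apol_def)
  qed
qed

lemma apol_01:
  assumes v: "0 \<le> v" and P: "0 < P" and sg: "0 < \<sigma>" and l: "0 \<le> lam"
  shows "0 \<le> apol P \<sigma> lam v \<and> apol P \<sigma> lam v \<le> 1"
proof (cases "lam > 0 \<and> v > 0")
  case True
  have vP: "v * P > 0" using True P by simp
  have "apol P \<sigma> lam v * (v * P) = max 0 (min (1/lam - \<sigma>\<^sup>2) (v * P))"
    using apol_x[OF v P sg] True by (simp add: mult.assoc)
  then have "apol P \<sigma> lam v = max 0 (min (1/lam - \<sigma>\<^sup>2) (v * P)) / (v * P)"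
    using vP by (metis nonzero_mult_div_cancel_right less_irrefl)
  moreover have "0 \<le> max 0 (min (1/lam - \<sigma>\<^sup>2) (v * P)) / (v * P)" using vP by simp
  moreover have "max 0 (min (1/lam - \<sigma>\<^sup>2) (v * P)) / (v * P) \<le> 1" using vP by (simp add: divide_le_eq)
  ultimately show ?thesis by simp
next
  case False
  then show ?thesis using v l by (auto simp: apol_def)
qed

lemma apol_pw:
  assumes v: "0 \<le> v" and P: "0 < P" and sg: "0 < \<sigma>" and l: "0 \<le> lam" and b: "0 \<le> b" "b \<le> 1"
  shows "ln (1 + b* v * P/\<sigma>\<^sup>2) + lam*((1-b)* v * P)
     \<le> ln (1 + apol P \<sigma> lam v * v * P/\<sigma>\<^sup>2) + lam*((1 - apol P \<sigma> lam v)* v * P)"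
proof (cases "lam = 0")
  case True
  then have a1: "apol P \<sigma> lam v = 1" using sg by (simp add: apol_def)
  have "b* v * P/\<sigma>\<^sup>2 \<le> v * P/\<sigma>\<^sup>2"
    using b v P by (intro divide_right_mono mult_right_mono) (auto simp: mult_left_le_one_le)
  moreover have "0 \<le> b* v * P/\<sigma>\<^sup>2" using b v P by simp
  ultimately show ?thesis using True a1 by simp
next
  case False
  then have lp: "lam > 0" using l by simp
  have x: "0 \<le> v * P" using v P by simp
  have y: "0 \<le> b*(v * P)" "b*(v * P) \<le> v * P" using b x by (auto simp: mult_left_le_one_le)
  have s: "0 < \<sigma>\<^sup>2" using sg by simp
  note c = pw_core[OF x s lp y]
  have ax: "apol P \<sigma> lam v * v * P = max 0 (min (1/lam - \<sigma>\<^sup>2) (v * P))" by (rule apol_x[OF v P sg lp])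
  have e1: "(1 - apol P \<sigma> lam v)* v * P = v * P - apol P \<sigma> lam v * v * P" by (simp add: algebra_simps)
  have e2: "(1-b)* v * P = v * P - b*(v * P)" "b* v * P = b*(v * P)" by (simp_all add: algebra_simps)
  show ?thesis unfolding e1 e2 ax using c by simp
qed

lemma clip_lip: "\<bar>max 0 (min u c) - max 0 (min w c)\<bar> \<le> \<bar>u - (w::real)\<bar>"
  by (auto simp: max_def min_def abs_if)

theorem proposition4p1:
  fixes M :: "'a measure" and h :: "'a \<Rightarrow> real" and f :: "real \<Rightarrow> real"
    and P \<sigma> Q lams :: real
  assumes "prob_space M"
    and h_dist: "distributed M lborel h (\<lambda>x. ennreal (f x))"
    and f_cont: "continuous_on {0..} f"
    and h_nonneg: "\<forall>\<nu>\<in>space M. 0 \<le> h \<nu>"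
    and h_int: "integrable M h"
    and P_pos: "P > 0" and \<sigma>_pos: "\<sigma> > 0"
    and Q_bounds: "0 \<le> Q" "Q \<le> (\<integral>\<nu>. h \<nu> * P \<partial>M)"
    and lams_nonneg: "lams \<ge> 0"
    and lams_min: "\<forall>lam\<ge>0. dual_fun M h P \<sigma> Q lams \<le> dual_fun M h P \<sigma> Q lam"
    and lams_unique: "\<forall>lam\<ge>0. dual_fun M h P \<sigma> Q lam = dual_fun M h P \<sigma> Q lams \<longrightarrow> lam = lams"
  shows "P1_optimal M h P \<sigma> Q
           (\<lambda>\<nu>. if lams > 0 \<and> h \<nu> \<ge> 1 / (lams * P) - \<sigma>\<^sup>2 / P
                 then 1 / (lams * h \<nu> * P) - \<sigma>\<^sup>2 / (h \<nu> * P)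
                 else 1)"
proof -
  interpret prob_space M by (rule assms(1))
  have hm[measurable]: "h \<in> borel_measurable M" using h_int by auto
  define A where "A = (\<lambda>lam \<nu>. apol P \<sigma> lam (h \<nu>))"
  define R where "R = avg_rate M h P \<sigma>"
  define H where "H = avg_harvest M h P"
  define g where "g = dual_fun M h P \<sigma> Q"
  define E where "E = (\<integral>\<nu>. h \<nu> * P \<partial>M)"
  have gmin: "\<And>lam. 0 \<le> lam \<Longrightarrow> g lams \<le> g lam" using lams_min unfolding g_def by auto
  have guniq: "\<And>lam. 0 \<le> lam \<Longrightarrow> g lam = g lams \<Longrightarrow> lam = lams" using lams_unique unfolding g_def by auto
  have Am[measurable]: "\<And>lam. A lam \<in> borel_measurable M" unfolding A_def apol_def by measurable
  have A01: "\<And>lam \<nu>. 0 \<le> lam \<Longrightarrow> \<nu> \<in> space M \<Longrightarrow> 0 \<le> A lam \<nu> \<and> A lam \<nu> \<le> 1"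
    unfolding A_def using apol_01 h_nonneg P_pos \<sigma>_pos by blast
  have Asp: "\<And>lam. 0 \<le> lam \<Longrightarrow> A lam \<in> split_policies M"
    unfolding split_policies_def using Am A01 by blast
  have Ax: "\<And>lam \<nu>. 0 < lam \<Longrightarrow> \<nu> \<in> space M \<Longrightarrow>
      A lam \<nu> * h \<nu> * P = max 0 (min (1/lam - \<sigma>\<^sup>2) (h \<nu> * P))"
    unfolding A_def using apol_x h_nonneg P_pos \<sigma>_pos by blast
  have intP: "integrable M (\<lambda>\<nu>. h \<nu> * P)" using h_int by simp
  have intR: "integrable M (\<lambda>\<nu>. ln (1 + \<beta> \<nu> * h \<nu> * P / \<sigma>\<^sup>2))"
    if b: "\<beta> \<in> split_policies M" for \<beta>
  proof -
    have bm[measurable]: "\<beta> \<in> borel_measurable M" and b01: "\<forall>\<nu>\<in>space M. 0 \<le> \<beta> \<nu> \<and> \<beta> \<nu> \<le> 1"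
      using b unfolding split_policies_def by auto
    show ?thesis
    proof (rule Bochner_Integration.integrable_bound[where f="\<lambda>\<nu>. h \<nu> * P / \<sigma>\<^sup>2"])
      show "integrable M (\<lambda>\<nu>. h \<nu> * P / \<sigma>\<^sup>2)" using intP by simp
      show "(\<lambda>\<nu>. ln (1 + \<beta> \<nu> * h \<nu> * P / \<sigma>\<^sup>2)) \<in> borel_measurable M" by measurable
      show "AE \<nu> in M. norm (ln (1 + \<beta> \<nu> * h \<nu> * P / \<sigma>\<^sup>2)) \<le> norm (h \<nu> * P / \<sigma>\<^sup>2)"
      proof (rule AE_I2)
        fix \<nu> assume \<nu>: "\<nu> \<in> space M"
        have hp: "0 \<le> h \<nu> * P" using h_nonneg \<nu> P_pos by simp
        have y0: "0 \<le> \<beta> \<nu> * h \<nu> * P / \<sigma>\<^sup>2" using b01 \<nu> hp by (simp add: mult.assoc)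
        have "\<beta> \<nu> * (h \<nu> * P) \<le> h \<nu> * P" using b01 \<nu> hp by (simp add: mult_left_le_one_le)
        then have yle: "\<beta> \<nu> * h \<nu> * P / \<sigma>\<^sup>2 \<le> h \<nu> * P / \<sigma>\<^sup>2"
          by (simp add: mult.assoc divide_right_mono)
        have "ln (1 + \<beta> \<nu> * h \<nu> * P / \<sigma>\<^sup>2) \<le> \<beta> \<nu> * h \<nu> * P / \<sigma>\<^sup>2"
          using ln_le_minus_one[of "1 + \<beta> \<nu> * h \<nu> * P / \<sigma>\<^sup>2"] y0 by simp
        moreover have "0 \<le> ln (1 + \<beta> \<nu> * h \<nu> * P / \<sigma>\<^sup>2)" using y0 by simp
        ultimately show "norm (ln (1 + \<beta> \<nu> * h \<nu> * P / \<sigma>\<^sup>2)) \<le> norm (h \<nu> * P / \<sigma>\<^sup>2)"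
          using yle y0 hp by simp
      qed
    qed
  qed
  have intH: "integrable M (\<lambda>\<nu>. (1 - \<beta> \<nu>) * h \<nu> * P)"
    if b: "\<beta> \<in> split_policies M" for \<beta>
  proof -
    have bm[measurable]: "\<beta> \<in> borel_measurable M" and b01: "\<forall>\<nu>\<in>space M. 0 \<le> \<beta> \<nu> \<and> \<beta> \<nu> \<le> 1"
      using b unfolding split_policies_def by auto
    show ?thesis
    proof (rule Bochner_Integration.integrable_bound[where f="\<lambda>\<nu>. h \<nu> * P"])
      show "integrable M (\<lambda>\<nu>. h \<nu> * P)" by (rule intP)
      show "(\<lambda>\<nu>. (1 - \<beta> \<nu>) * h \<nu> * P) \<in> borel_measurable M" by measurable
      show "AE \<nu> in M. norm ((1 - \<beta> \<nu>) * h \<nu> * P) \<le> norm (h \<nu> * P)"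
      proof (rule AE_I2)
        fix \<nu> assume \<nu>: "\<nu> \<in> space M"
        have hp: "0 \<le> h \<nu> * P" using h_nonneg \<nu> P_pos by simp
        have "(1 - \<beta> \<nu>) * (h \<nu> * P) \<le> h \<nu> * P" using b01 \<nu> hp by (simp add: mult_left_le_one_le)
        moreover have "0 \<le> (1 - \<beta> \<nu>) * (h \<nu> * P)" using b01 \<nu> hp by simp
        ultimately show "norm ((1 - \<beta> \<nu>) * h \<nu> * P) \<le> norm (h \<nu> * P)"
          using hp by (simp add: mult.assoc)
      qed
    qed
  qed
  have Lsum: "R \<beta> + lam * H \<beta> = (\<integral>\<nu>. ln (1 + \<beta> \<nu> * h \<nu> * P / \<sigma>\<^sup>2) + lam * ((1 - \<beta> \<nu>) * h \<nu> * P) \<partial>M)"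
    if b: "\<beta> \<in> split_policies M" for \<beta> lam
    unfolding R_def H_def avg_rate_def avg_harvest_def
    using intR[OF b] intH[OF b] by simp
  have Lle: "R \<beta> + lam * H \<beta> \<le> R (A lam) + lam * H (A lam)"
    if b: "\<beta> \<in> split_policies M" and l: "0 \<le> lam" for \<beta> lam
  proof -
    have b01: "\<forall>\<nu>\<in>space M. 0 \<le> \<beta> \<nu> \<and> \<beta> \<nu> \<le> 1"
      using b unfolding split_policies_def by auto
    show ?thesis unfolding Lsum[OF b] Lsum[OF Asp[OF l]]
    proof (rule integral_mono)
      show "integrable M (\<lambda>\<nu>. ln (1 + \<beta> \<nu> * h \<nu> * P / \<sigma>\<^sup>2) + lam * ((1 - \<beta> \<nu>) * h \<nu> * P))"
        using intR[OF b] intH[OF b] by auto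
      show "integrable M (\<lambda>\<nu>. ln (1 + A lam \<nu> * h \<nu> * P / \<sigma>\<^sup>2) + lam * ((1 - A lam \<nu>) * h \<nu> * P))"
        using intR[OF Asp[OF l]] intH[OF Asp[OF l]] by auto
      fix \<nu> assume \<nu>: "\<nu> \<in> space M"
      show "ln (1 + \<beta> \<nu> * h \<nu> * P / \<sigma>\<^sup>2) + lam * ((1 - \<beta> \<nu>) * h \<nu> * P)
          \<le> ln (1 + A lam \<nu> * h \<nu> * P / \<sigma>\<^sup>2) + lam * ((1 - A lam \<nu>) * h \<nu> * P)"
        unfolding A_def using apol_pw[of "h \<nu>" P \<sigma> lam "\<beta> \<nu>"] h_nonneg \<nu> P_pos \<sigma>_pos l b01 by auto
    qed
  qed
  have gval: "g lam = R (A lam) + lam * (H (A lam) - Q)" if l: "0 \<le> lam" for lam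
    unfolding g_def dual_fun_def R_def[symmetric] H_def[symmetric]
  proof (rule cSup_eq_maximum)
    show "R (A lam) + lam * (H (A lam) - Q) \<in> (\<lambda>\<beta>. R \<beta> + lam * (H \<beta> - Q)) ` split_policies M"
      using Asp[OF l] by auto
    fix x assume "x \<in> (\<lambda>\<beta>. R \<beta> + lam * (H \<beta> - Q)) ` split_policies M"
    then obtain \<beta> where b: "\<beta> \<in> split_policies M" and x: "x = R \<beta> + lam * (H \<beta> - Q)" by auto
    show "x \<le> R (A lam) + lam * (H (A lam) - Q)" using Lle[OF b l] x by (simp add: algebra_simps)
  qed
  have sub: "g lam + (lam' - lam) * (H (A lam) - Q) \<le> g lam'" if l: "0 \<le> lam" and l': "0 \<le> lam'" for lam lam'
  proof -
    have "R (A lam) + lam' * H (A lam) \<le> R (A lam') + lam' * H (A lam')" by (rule Lle[OF Asp[OF l] l'])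
    then show ?thesis by (simp add: gval l l' algebra_simps)
  qed
  have Hdiff: "H (A l1) \<le> H (A l2) + \<bar>1/l1 - 1/l2\<bar>" if l1: "0 < l1" and l2: "0 < l2" for l1 l2
  proof -
    let ?d = "\<bar>1/l1 - 1/l2\<bar>"
    have "H (A l1) \<le> (\<integral>\<nu>. (1 - A l2 \<nu>) * h \<nu> * P + ?d \<partial>M)"
      unfolding H_def avg_harvest_def
    proof (rule integral_mono)
      show "integrable M (\<lambda>\<nu>. (1 - A l1 \<nu>) * h \<nu> * P)" using intH Asp l1 by simp
      show "integrable M (\<lambda>\<nu>. (1 - A l2 \<nu>) * h \<nu> * P + ?d)" using intH[OF Asp] l2 by simp
      fix \<nu> assume \<nu>: "\<nu> \<in> space M"
      have e: "(1 - A l \<nu>) * h \<nu> * P = h \<nu> * P - A l \<nu> * h \<nu> * P" for l by (simp add: algebra_simps)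
      show "(1 - A l1 \<nu>) * h \<nu> * P \<le> (1 - A l2 \<nu>) * h \<nu> * P + ?d"
        unfolding e Ax[OF l1 \<nu>] Ax[OF l2 \<nu>]
        using clip_lip[of "1/l1 - \<sigma>\<^sup>2" "h \<nu> * P" "1/l2 - \<sigma>\<^sup>2"] by (simp add: abs_le_iff)
    qed
    also have "\<dots> = H (A l2) + ?d"
      unfolding H_def avg_harvest_def using intH[OF Asp] l2 prob_space by simp
    finally show ?thesis .
  qed
  have sg2: "0 < \<sigma>\<^sup>2" using \<sigma>_pos by simp
  have lams_le: "lams \<le> 1/\<sigma>\<^sup>2"
  proof (rule ccontr)
    assume "\<not> lams \<le> 1/\<sigma>\<^sup>2"
    then have gt: "lams > 1/\<sigma>\<^sup>2" by simp
    define l0 where "l0 = 1/\<sigma>\<^sup>2"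
    have l0p: "0 < l0" unfolding l0_def using sg2 by simp
    have HA0: "H (A l0) = E" unfolding H_def avg_harvest_def E_def
    proof (rule Bochner_Integration.integral_cong[OF refl])
      fix \<nu> assume \<nu>: "\<nu> \<in> space M"
      have hp: "0 \<le> h \<nu> * P" using h_nonneg \<nu> P_pos by simp
      have "A l0 \<nu> * h \<nu> * P = 0" using Ax[OF l0p \<nu>] hp sg2 unfolding l0_def by simp
      then show "(1 - A l0 \<nu>) * h \<nu> * P = h \<nu> * P" by (simp add: algebra_simps)
    qed
    have "g l0 + (lams - l0) * (H (A l0) - Q) \<le> g lams" using sub[of l0 lams] l0p lams_nonneg by simp
    moreover have "0 \<le> (lams - l0) * (H (A l0) - Q)"
      using HA0 Q_bounds(2) gt unfolding E_def l0_def by simp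
    ultimately have "g l0 \<le> g lams" by simp
    moreover have "g lams \<le> g l0" using gmin l0p by simp
    ultimately have "l0 = lams" using guniq l0p by simp
    then show False using gt unfolding l0_def by simp
  qed
  have teq: "(\<lambda>\<nu>. if lams > 0 \<and> h \<nu> \<ge> 1 / (lams * P) - \<sigma>\<^sup>2 / P
                 then 1 / (lams * h \<nu> * P) - \<sigma>\<^sup>2 / (h \<nu> * P) else 1) = A lams"
    using lams_le by (auto simp: A_def apol_def)
  have feas: "Q \<le> H (A lams)"
  proof (cases "lams = 0")
    case True
    have HA: "H (A lams) = 0" unfolding H_def avg_harvest_def
      using True sg2 by (simp add: A_def apol_def)
    show ?thesis
    proof (rule ccontr)
      assume "\<not> Q \<le> H (A lams)"
      then have Qp: "0 < Q" using HA by simp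
      define sq where "sq = (\<lambda>(n::nat) \<nu>. max 0 (h \<nu> * P - real n))"
      have lim: "(\<lambda>n. \<integral>\<nu>. sq n \<nu> \<partial>M) \<longlonglongrightarrow> (\<integral>\<nu>. 0 \<partial>M)"
      proof (rule integral_dominated_convergence[where w="\<lambda>\<nu>. h \<nu> * P"])
        show "(\<lambda>\<nu>. 0::real) \<in> borel_measurable M" by simp
        show "\<And>n. sq n \<in> borel_measurable M" unfolding sq_def by measurable
        show "integrable M (\<lambda>\<nu>. h \<nu> * P)" by (rule intP)
        show "AE \<nu> in M. (\<lambda>n. sq n \<nu>) \<longlonglongrightarrow> 0"
        proof (rule AE_I2)
          fix \<nu> assume \<nu>: "\<nu> \<in> space M"
          obtain N where N: "h \<nu> * P \<le> real N" using real_arch_simple by blast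
          have "eventually (\<lambda>n. sq n \<nu> = 0) sequentially"
            unfolding eventually_sequentially sq_def using N by (intro exI[of _ N]) auto
          then show "(\<lambda>n. sq n \<nu>) \<longlonglongrightarrow> 0" by (rule tendsto_eventually)
        qed
        show "\<And>n. AE \<nu> in M. norm (sq n \<nu>) \<le> h \<nu> * P"
        proof (rule AE_I2)
          fix n \<nu> assume \<nu>: "\<nu> \<in> space M"
          have hp: "0 \<le> h \<nu> * P" using h_nonneg \<nu> P_pos by simp
          then show "norm (sq n \<nu>) \<le> h \<nu> * P" unfolding sq_def by auto
        qed
      qed
      then have "(\<lambda>n. \<integral>\<nu>. sq n \<nu> \<partial>M) \<longlonglongrightarrow> 0" by simp
      from order_tendstoD(2)[OF this Qp] obtain n where n: "(\<integral>\<nu>. sq n \<nu> \<partial>M) < Q"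
        unfolding eventually_sequentially by auto
      define lam where "lam = 1 / (real n + \<sigma>\<^sup>2)"
      have np: "0 < real n + \<sigma>\<^sup>2" using sg2 of_nat_0_le_iff[of n] by linarith
      have lp: "0 < lam" unfolding lam_def using np by simp
      have il: "1/lam - \<sigma>\<^sup>2 = real n" unfolding lam_def using np by simp
      have HL: "H (A lam) = (\<integral>\<nu>. sq n \<nu> \<partial>M)" unfolding H_def avg_harvest_def
      proof (rule Bochner_Integration.integral_cong[OF refl])
        fix \<nu> assume \<nu>: "\<nu> \<in> space M"
        have hp: "0 \<le> h \<nu> * P" using h_nonneg \<nu> P_pos by simp
        have e: "(1 - A lam \<nu>) * h \<nu> * P = h \<nu> * P - A lam \<nu> * h \<nu> * P" by (simp add: algebra_simps)
        show "(1 - A lam \<nu>) * h \<nu> * P = sq n \<nu>"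
          unfolding e Ax[OF lp \<nu>] il sq_def using hp by (auto simp: max_def min_def)
      qed
      have "g lam + (0 - lam) * (H (A lam) - Q) \<le> g 0" using sub[of lam 0] lp by simp
      moreover have "g 0 \<le> g lam" using gmin lp True by simp
      moreover have "0 < lam * (Q - H (A lam))" using lp n HL by simp
      ultimately show False by (simp add: algebra_simps)
    qed
  next
    case False
    then have lp: "0 < lams" using lams_nonneg by simp
    show ?thesis
    proof (rule ccontr)
      assume "\<not> Q \<le> H (A lams)"
      define e where "e = Q - H (A lams)"
      have ep: "0 < e" using \<open>\<not> Q \<le> H (A lams)\<close> unfolding e_def by simp
      define lam where "lam = lams * (1 + e * lams)"
      have lgt: "lams < lam" unfolding lam_def using lp ep by (simp add: algebra_simps)
      have lamp: "0 < lam" using lgt lp by simp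
      have d: "1/lams - 1/lam = e / (1 + e * lams)"
      proof -
        have pos: "0 < 1 + e * lams" using lp ep by (simp add: add_pos_pos)
        then have "lams * (1 + e * lams) \<noteq> 0" using lp by simp
        then show ?thesis unfolding lam_def using lp pos by (simp add: field_simps)
      qed
      have "e / (1 + e * lams) < e" using lp ep by (simp add: divide_less_eq)
      moreover have "0 \<le> e / (1 + e * lams)" using lp ep by simp
      ultimately have "\<bar>1/lam - 1/lams\<bar> < e" using d by simp
      then have "H (A lam) < Q" using Hdiff[OF lamp lp] unfolding e_def by simp
      have "g lam + (lams - lam) * (H (A lam) - Q) \<le> g lams" using sub[of lam lams] lp lamp by simp
      moreover have "g lams \<le> g lam" using gmin lamp by simp
      moreover have "0 < (lams - lam) * (H (A lam) - Q)"
        using lgt \<open>H (A lam) < Q\<close> by (simp add: mult_neg_neg)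
      ultimately show False by simp
    qed
  qed
  have slack: "lams * (H (A lams) - Q) = 0"
  proof (cases "lams = 0")
    case False
    then have lp: "0 < lams" using lams_nonneg by simp
    have "H (A lams) \<le> Q"
    proof (rule ccontr)
      assume "\<not> H (A lams) \<le> Q"
      define e where "e = H (A lams) - Q"
      have ep: "0 < e" using \<open>\<not> H (A lams) \<le> Q\<close> unfolding e_def by simp
      define lam where "lam = 1 / (1/lams + e/2)"
      have dp: "0 < 1/lams + e/2" using lp ep by (simp add: add_pos_pos)
      have lamp: "0 < lam" unfolding lam_def using dp by simp
      have il: "1/lam = 1/lams + e/2" unfolding lam_def by simp
      have llt: "lam < lams"
      proof -
        have "1/lams < 1/lam" using il ep by simp
        then show ?thesis using lp lamp by (simp add: field_simps)
      qed
      have "H (A lams) \<le> H (A lam) + \<bar>1/lams - 1/lam\<bar>" by (rule Hdiff[OF lp lamp])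
      also have "\<bar>1/lams - 1/lam\<bar> = e/2" using il ep by simp
      finally have Hl: "Q < H (A lam)" using ep unfolding e_def by (simp add: field_simps)
      have "g lam + (lams - lam) * (H (A lam) - Q) \<le> g lams" using sub[of lam lams] lp lamp by simp
      moreover have "g lams \<le> g lam" using gmin lamp by simp
      moreover have "0 < (lams - lam) * (H (A lam) - Q)" using llt Hl by simp
      ultimately show False by simp
    qed
    then show ?thesis using feas by simp
  qed simp
  show ?thesis unfolding teq P1_optimal_def
  proof (intro conjI ballI impI)
    show "A lams \<in> split_policies M" by (rule Asp[OF lams_nonneg])
    show "Q \<le> avg_harvest M h P (A lams)" using feas unfolding H_def .
    fix \<beta> assume b: "\<beta> \<in> split_policies M" and hq: "Q \<le> avg_harvest M h P \<beta>"
    have "0 \<le> lams * (H \<beta> - Q)" using lams_nonneg hq unfolding H_def by simp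
    moreover have "R \<beta> + lams * H \<beta> \<le> R (A lams) + lams * H (A lams)" by (rule Lle[OF b lams_nonneg])
    ultimately have "R \<beta> \<le> R (A lams)" using slack by (auto simp: algebra_simps)
    then show "avg_rate M h P \<sigma> \<beta> \<le> avg_rate M h P \<sigma> (A lams)" unfolding R_def .
  qed
qed

end
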